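(* Let $n \geq 1$ and $0 < k < n$ be integers, and let $M$ be an invertible $n \times n$ matrix over the field $\mathbb{F}_2 = \{0,1\}$, acting on column vectors $x \in \mathbb{F}_2^n$ (binary strings of length $n$) by matrix multiplication with arithmetic modulo $2$. Let $S_k \subseteq \mathbb{F}_2^n$ be the set of binary strings of length $n$ with Hamming weight exactly $k$. Then there do not exist two distinct positions $i \neq j$ in $\{1,\dots,n\}$ such that the $i$-th digit of $Mx$ is the same for all $x \in S_k$ and the $j$-th digit of $Mx$ is the same for all $x \in S_k$.
   Context: $\mathrm{GL}_n(\mathbb{F}_2)$ denotes the group of invertible $n\times n$ matrices over the two-element field; it is isomorphic to the group of $n$-qubit permutation unitaries generated by CNOT gates, acting on computational basis strings. *)

theory Defs
  imports "HOL-Analysis.Analysis" "HOL-Library.Z2"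
begin

definition hamming_weight :: "bit ^ 'n \<Rightarrow> nat" where
  "hamming_weight x = card {i. x $ i = 1}"

definition weight_slice :: "nat \<Rightarrow> (bit ^ 'n) set" where
  "weight_slice k = {x. hamming_weight x = k}"

end

theory Submission
  imports Defs
begin

definition ind :: "'n set \<Rightarrow> bit ^ 'n" where
  "ind S = (\<chi> m. if m \<in> S then 1 else 0)"

lemma ind_weight: "hamming_weight (ind S) = card S"
  unfolding hamming_weight_def ind_def by simp

lemma ind_mult: "(M *v ind S) $ i = (\<Sum>m\<in>S. M $ i $ m)"
proof -
  have "(M *v ind S) $ i = (\<Sum>m\<in>UNIV. if m \<in> S then M $ i $ m else 0)"
    unfolding ind_def matrix_vector_mult_def vec_lambda_beta
  proof (rule sum.cong[OF refl])
    fix m show "M $ i $ m * (if m \<in> S then 1 else 0) = (if m \<in> S then M $ i $ m else 0)"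
      by (cases "m \<in> S") simp_all
  qed
  also have "\<dots> = (\<Sum>m\<in>S. M $ i $ m)"
    by (simp add: sum.If_cases)
  finally show ?thesis .
qed

lemma row_const:
  fixes M :: "bit ^ 'n ^ 'n"
  assumes k: "0 < k" "k < CARD('n)"
    and c: "\<forall>x\<in>weight_slice k. (M *v x) $ i = c"
  shows "M $ i $ a = M $ i $ b"
proof (cases "a = b")
  case False
  have "k - 1 \<le> card (UNIV - {a, b})"
    using k False by (simp add: card_Diff_subset)
  then obtain T where T: "T \<subseteq> UNIV - {a,b}" "card T = k - 1"
    by (meson obtain_subset_with_card_n)
  have fin: "finite T" by simp
  have aT: "a \<notin> T" and bT: "b \<notin> T" using T by auto
  have "ind (insert a T) \<in> weight_slice k"
    using aT T k by (simp add: weight_slice_def ind_weight)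
  hence 1: "(\<Sum>m\<in>insert a T. M $ i $ m) = c" using c ind_mult by metis
  have "ind (insert b T) \<in> weight_slice k"
    using bT T k by (simp add: weight_slice_def ind_weight)
  hence 2: "(\<Sum>m\<in>insert b T. M $ i $ m) = c" using c ind_mult by metis
  have "M $ i $ a + (\<Sum>m\<in>T. M $ i $ m) = M $ i $ b + (\<Sum>m\<in>T. M $ i $ m)"
    by (metis 1 2 sum.insert[OF fin aT] sum.insert[OF fin bT])
  thus ?thesis by (rule add_right_imp_eq)
qed simp

theorem theorem1:
  fixes M :: "bit ^ 'n ^ 'n" and k :: nat
  assumes "invertible M"
    and "0 < k" and "k < CARD('n)"
  shows "\<not> (\<exists>i j. i \<noteq> j
            \<and> (\<exists>c. \<forall>x\<in>weight_slice k. (M *v x) $ i = c)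
            \<and> (\<exists>d. \<forall>x\<in>weight_slice k. (M *v x) $ j = d))"
proof
  assume "\<exists>i j. i \<noteq> j
            \<and> (\<exists>c. \<forall>x\<in>weight_slice k. (M *v x) $ i = c)
            \<and> (\<exists>d. \<forall>x\<in>weight_slice k. (M *v x) $ j = d)"
  then obtain i j c d where ij: "i \<noteq> j" and
    c: "\<forall>x\<in>weight_slice k. (M *v x) $ i = c" and
    d: "\<forall>x\<in>weight_slice k. (M *v x) $ j = d" by blast
  obtain N where N: "M ** N = mat 1" using assms(1) unfolding invertible_def by blast
  have ri: "\<And>a. M $ i $ a = M $ i $ i" using row_const[OF assms(2,3) c] by blast
  have rj: "\<And>a. M $ j $ a = M $ j $ j" using row_const[OF assms(2,3) d] by blast
  have e: "\<And>r l. (M ** N) $ r $ l = (\<Sum>m\<in>UNIV. M $ r $ m * N $ m $ l)"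
    by (simp add: matrix_matrix_mult_def)
  have ii: "(M ** N) $ i $ i = 1" and ji: "(M ** N) $ j $ i = 0"
    using N ij by (auto simp: mat_def)
  show False
  proof (cases "M $ i $ i = M $ j $ j")
    case True
    have "(M ** N) $ i $ i = (M ** N) $ j $ i"
      unfolding e using ri rj True by metis
    thus False using ii ji by simp
  next
    case False
    hence "M $ i $ i = 0 \<or> M $ j $ j = 0"
    proof -
      have "x \<noteq> 0 \<Longrightarrow> x = 1" for x :: bit by simp
      thus ?thesis using False by metis
    qed
    thus False
    proof
      assume "M $ i $ i = 0"
      hence "\<forall>m. M $ i $ m * N $ m $ i = 0" using ri by (metis mult_zero_left)
      hence "(M ** N) $ i $ i = 0" unfolding e by (intro sum.neutral) blast
      thus False using ii by simp
    next
      assume "M $ j $ j = 0"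
      hence "\<forall>m. M $ j $ m * N $ m $ j = 0" using rj by (metis mult_zero_left)
      hence "(M ** N) $ j $ j = 0" unfolding e by (intro sum.neutral) blast
      thus False using N by (simp add: mat_def)
    qed
  qed
qed

end
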